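(* Let $k\in\mathbb{N}$ and $n\in\mathbb{N}\cup\{\omega\}$ with $3\le k\le n$. Then: (1) if $n$ is finite, $Q(n,k)\ge \binom{n}{\lfloor (k-1)/2\rfloor}$; (2) if $n=\omega$, $Q(\omega,k)=+\infty$, i.e. $\mathbb{Z}_2^\omega$ admits no partition into finitely many $k$-thin sets.
   Context: For $n\in\mathbb{N}\cup\{\omega\}$, $\mathbb{Z}_2^n$ is the set of binary sequences of length $n$ (indexed by $\{0,\dots,n-1\}$, resp. by $\omega=\{0,1,2,\dots\}$). The Hamming distance is $\mathrm{hd}(x,y)=|\{i: x(i)\ne y(i)\}|$, and the minimum distance of $T\subseteq\mathbb{Z}_2^n$ is $\mathrm{HD}(T)=\inf\{\mathrm{hd}(x,y): x,y\in T, x\ne y\}$ (infimum of the empty set being $+\infty$). A set $T\subseteq\mathbb{Z}_2^n$ is $k$-thin if $\mathrm{HD}(T)\ge k$. For $2\le k\le n$, $Q(n,k)$ is the smallest extended natural number $s$ such that $\mathbb{Z}_2^n$ can be partitioned into $s$ sets that are $k$-thin ($+\infty$ if there is no such finite $s$). *)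

theory Defs
  imports Main "HOL-Library.Extended_Nat"
begin

text \<open>Binary sequences of length n (n an extended natural; \<infinity> plays the role of omega):
  functions nat \<Rightarrow> bool that vanish (are False) at all indices i with i \<ge> n.\<close>
definition cube :: "enat \<Rightarrow> (nat \<Rightarrow> bool) set" where
  "cube n = {x. \<forall>i. n \<le> enat i \<longrightarrow> \<not> x i}"

definition hd :: "(nat \<Rightarrow> bool) \<Rightarrow> (nat \<Rightarrow> bool) \<Rightarrow> enat" where
  "hd x y = (if finite {i. x i \<noteq> y i} then enat (card {i. x i \<noteq> y i}) else \<infinity>)"

text \<open>Minimum distance; the infimum of the empty set is \<infinity>.\<close>
definition HD :: "(nat \<Rightarrow> bool) set \<Rightarrow> enat" where
  "HD T = Inf {hd x y | x y. x \<in> T \<and> y \<in> T \<and> x \<noteq> y}"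

definition thin :: "nat \<Rightarrow> (nat \<Rightarrow> bool) set \<Rightarrow> bool" where
  "thin k T \<longleftrightarrow> enat k \<le> HD T"

text \<open>The cube of length n can be partitioned into s k-thin sets
  (given by a colouring with colours 0..<s; empty classes only make s non-minimal).\<close>
definition partitionable :: "enat \<Rightarrow> nat \<Rightarrow> nat \<Rightarrow> bool" where
  "partitionable n k s \<longleftrightarrow>
     (\<exists>c :: (nat \<Rightarrow> bool) \<Rightarrow> nat. (\<forall>x\<in>cube n. c x < s) \<and>
        (\<forall>j<s. thin k {x \<in> cube n. c x = j}))"

definition Q :: "enat \<Rightarrow> nat \<Rightarrow> enat" where
  "Q n k = Inf {enat s | s. partitionable n k s}"

end

theory Submission
  imports Defs
begin

lemma key:
  assumes p: "partitionable n k s" and S: "S \<subseteq> cube n"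
    and close: "\<And>x y. x \<in> S \<Longrightarrow> y \<in> S \<Longrightarrow> x \<noteq> y \<Longrightarrow> hd x y < enat k"
  shows "finite S \<and> card S \<le> s"
proof -
  obtain c where c1: "\<forall>x\<in>cube n. c x < s" and c2: "\<forall>j<s. thin k {x \<in> cube n. c x = j}"
    using p unfolding partitionable_def by blast
  have inj: "inj_on c S"
  proof (rule inj_onI, rule ccontr)
    fix x y assume xS: "x \<in> S" and yS: "y \<in> S" and e: "c x = c y" and ne: "x \<noteq> y"
    let ?T = "{z \<in> cube n. c z = c x}"
    have "c x < s" using c1 xS S by blast
    hence th: "enat k \<le> HD ?T" using c2 unfolding thin_def by blast
    have "HD ?T \<le> hd x y" unfolding HD_def
    proof (rule Inf_lower)
      show "hd x y \<in> {hd xa ya |xa ya. xa \<in> ?T \<and> ya \<in> ?T \<and> xa \<noteq> ya}"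
        using xS yS S e ne by (intro CollectI exI[of _ x] exI[of _ y]) auto
    qed
    with th close[OF xS yS ne] show False by simp
  qed
  have img: "c ` S \<subseteq> {..<s}" using c1 S by blast
  hence fin: "finite (c ` S)" using finite_subset by blast
  hence "finite S" using inj finite_image_iff by blast
  moreover have "card S \<le> s"
    using card_mono[OF _ img] card_image[OF inj] by simp
  ultimately show ?thesis by blast
qed

theorem proposition17:
  fixes k :: nat and n :: enat
  assumes "3 \<le> k" and "enat k \<le> n"
  shows "(\<forall>m::nat. n = enat m \<longrightarrow> enat (m choose ((k - 1) div 2)) \<le> Q n k)
       \<and> (n = \<infinity> \<longrightarrow> Q n k = \<infinity>)"
proof (intro conjI allI impI)
  fix m assume nm: "n = enat m"
  define r where "r = (k - 1) div 2"
  let ?F = "\<lambda>A::nat set. (\<lambda>i. i \<in> A)"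
  let ?SS = "{A. A \<subseteq> {..<m} \<and> card A = r}"
  let ?S = "?F ` ?SS"
  have injF: "inj_on ?F ?SS"
    by (rule inj_onI) (simp add: fun_eq_iff set_eq_iff)
  have cardS: "card ?S = m choose r"
    proof -
    have "card ?S = card ?SS" by (rule card_image[OF injF])
    also have "\<dots> = card {..<m} choose r" by (rule n_subsets) simp
    finally show ?thesis by simp
  qed
  have Scube: "?S \<subseteq> cube n" unfolding cube_def nm by auto
  have close: "hd x y < enat k" if xS: "x \<in> ?S" and yS: "y \<in> ?S" and nexy: "x \<noteq> y" for x y
  proof -
    obtain A where A0: "A \<in> ?SS" and xA: "x = ?F A" by (rule imageE[OF xS])
    obtain B where B0: "B \<in> ?SS" and yB: "y = ?F B" by (rule imageE[OF yS])
    have A: "A \<subseteq> {..<m}" "card A = r" using A0 by auto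
    have B: "B \<subseteq> {..<m}" "card B = r" using B0 by auto
    have fA: "finite A" "finite B" using A B finite_subset by blast+
    have eq: "{i. x i \<noteq> y i} = (A - B) \<union> (B - A)" unfolding xA yB by blast
    have "card ((A - B) \<union> (B - A)) \<le> card (A - B) + card (B - A)" by (rule card_Un_le)
    also have "\<dots> \<le> r + r"
      using card_mono[OF fA(1) Diff_subset[of A B]] card_mono[OF fA(2) Diff_subset[of B A]] A(2) B(2)
      by linarith
    also have "\<dots> < k" unfolding r_def using assms(1) by linarith
    finally show ?thesis unfolding hd_def eq using fA by simp
  qed
  have "\<forall>s. partitionable n k s \<longrightarrow> enat (m choose r) \<le> enat s"
    using key[OF _ Scube close] cardS by auto
  thus "enat (m choose ((k - 1) div 2)) \<le> Q n k"
    unfolding Q_def r_def by (auto intro!: Inf_greatest)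
next
  assume ni: "n = \<infinity>"
  let ?S = "range (\<lambda>j::nat. (\<lambda>i. i = j))"
  have Scube: "?S \<subseteq> cube n" unfolding cube_def ni by auto
  have inf: "infinite ?S"
  proof
    assume "finite ?S"
    moreover have "inj (\<lambda>j::nat. (\<lambda>i. i = j))" by (auto simp: inj_def fun_eq_iff)
    ultimately show False using finite_imageD by blast
  qed
  have close: "hd x y < enat k" if xS: "x \<in> ?S" and yS: "y \<in> ?S" and nexy: "x \<noteq> y" for x y
  proof -
    obtain a where xa: "x = (\<lambda>i. i = a)" by (rule rangeE[OF xS])
    obtain b where yb: "y = (\<lambda>i. i = b)" by (rule rangeE[OF yS])
    have "a \<noteq> b" using nexy xa yb by blast
    hence eq: "{i. x i \<noteq> y i} = {a, b}" unfolding xa yb by blast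
    show ?thesis unfolding hd_def eq using \<open>a \<noteq> b\<close> assms(1) by simp
  qed
  have "\<not> partitionable n k s" for s using key[OF _ Scube close] inf by blast
  thus "Q n k = \<infinity>" unfolding Q_def by (simp add: top_enat_def[symmetric])
qed

end
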